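(* Let $G=(A\cup B,E)$ be a balanced bipartite graph with $|A|=|B|=n/2$. Suppose there exist $r,\varphi>0$ and $\beta_1,\beta_2,\beta_3,\gamma\in(0,1)$ such that: (P1) $\deg_G(v)\ge r(1-\beta_1)$ for all $v\in A\cup B$; (P2) $e_G(X,Y)<r\beta_2|X|$ for all $X\subseteq A$, $Y\subseteq B$ with $|X|=|Y|\le r/\varphi$; (P3) $e_G(X,Y)\ge 2r(1-\beta_3)|X||Y|/n$ for all $X\subseteq A$, $Y\subseteq B$ with $|X|+|Y|>n/2$ and $\min\{|X|,|Y|\}>r/\varphi$; (P4) $\gamma\ge\max\{\beta_3,\beta_1+\beta_2\}$. Then $G$ contains an $\lfloor r(1-\gamma)\rfloor$-factor.
   Context: For $X\subseteq A$, $Y\subseteq B$, $e_G(X,Y)$ is the number of edges of $G$ with one endpoint in $X$ and the other in $Y$. An $s$-factor of a graph is a spanning $s$-regular subgraph. *)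

theory Defs
  imports Complex_Main
begin

definition bipartite_graph :: "'a set \<Rightarrow> 'a set \<Rightarrow> ('a \<Rightarrow> 'a \<Rightarrow> bool) \<Rightarrow> bool" where
  "bipartite_graph A B E \<longleftrightarrow> finite A \<and> finite B \<and> A \<inter> B = {} \<and>
     (\<forall>x y. E x y \<longrightarrow> E y x) \<and>
     (\<forall>x y. E x y \<longrightarrow> (x \<in> A \<and> y \<in> B) \<or> (x \<in> B \<and> y \<in> A))"

definition degree :: "('a \<Rightarrow> 'a \<Rightarrow> bool) \<Rightarrow> 'a \<Rightarrow> nat" where
  "degree E v = card {u. E v u}"

definition e_G :: "('a \<Rightarrow> 'a \<Rightarrow> bool) \<Rightarrow> 'a set \<Rightarrow> 'a set \<Rightarrow> nat" where
  "e_G E X Y = card {(x, y). x \<in> X \<and> y \<in> Y \<and> E x y}"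

definition has_factor :: "'a set \<Rightarrow> ('a \<Rightarrow> 'a \<Rightarrow> bool) \<Rightarrow> nat \<Rightarrow> bool" where
  "has_factor V E s \<longleftrightarrow> (\<exists>F. (\<forall>x y. F x y \<longrightarrow> E x y) \<and> (\<forall>x y. F x y \<longrightarrow> F y x) \<and>
      (\<forall>v\<in>V. degree F v = s))"

end

theory Submission
  imports Defs
begin

definition validM :: "'a set \<Rightarrow> 'a set \<Rightarrow> ('a \<Rightarrow> 'a \<Rightarrow> bool) \<Rightarrow> nat \<Rightarrow> ('a \<times> 'a) set \<Rightarrow> bool" where
  "validM A B E s M \<longleftrightarrow> M \<subseteq> {(a,b). a \<in> A \<and> b \<in> B \<and> E a b} \<and>
     (\<forall>a\<in>A. card {b. (a,b) \<in> M} \<le> s) \<and> (\<forall>b\<in>B. card {a. (a,b) \<in> M} \<le> s)"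

inductive RA :: "('a \<times> 'a) set \<Rightarrow> ('a \<Rightarrow> 'a \<Rightarrow> bool) \<Rightarrow> 'a \<Rightarrow> nat \<Rightarrow> 'a \<Rightarrow> bool"
  for M E a0 where
  RA0: "RA M E a0 0 a0"
| RAS: "RA M E a0 j a \<Longrightarrow> E a b \<Longrightarrow> (a,b) \<notin> M \<Longrightarrow> (a',b) \<in> M \<Longrightarrow> RA M E a0 (Suc j) a'"

lemma RA_0: assumes "RA M E a0 0 a" shows "a = a0"
  using assms by (cases rule: RA.cases) auto

lemma RA_Suc: assumes "RA M E a0 (Suc j) a'" shows "\<exists>a b. RA M E a0 j a \<and> E a b \<and> (a,b) \<notin> M \<and> (a',b) \<in> M"
  using assms by (cases rule: RA.cases) auto

lemma RA_transfer:
  assumes "RA M E a0 i v" "i < k0"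
    and noa: "\<forall>i<k0. \<not> RA M E a0 i a"
    and nob: "\<forall>i<k0. \<forall>x. RA M E a0 i x \<longrightarrow> E x b \<longrightarrow> (x,b) \<in> M"
    and "M1 = insert (a,b) (M - {(a,b1)})"
  shows "RA M1 E a0 i v"
  using assms(1,2)
proof (induction rule: RA.induct)
  case RA0
  show ?case by (rule RA.RA0)
next
  case (RAS j x y v)
  have IH: "RA M1 E a0 j x" using RAS by simp
  have "j < k0" using RAS by simp
  have h: "RA M E a0 j x \<longrightarrow> E x b \<longrightarrow> (x,b)\<in>M" using nob \<open>j<k0\<close> by blast
  have "(x,y) \<noteq> (a,b)" using h RAS.hyps by auto
  hence n1: "(x,y) \<notin> M1" using RAS assms(5) by auto
  have "RA M E a0 (Suc j) v" using RAS.hyps(1-4) by (rule RA.RAS)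
  moreover have "Suc j < k0" using RAS by simp
  ultimately have "(v,y) \<noteq> (a,b1)" using noa by auto
  hence "(v,y) \<in> M1" using RAS assms(5) by auto
  with n1 show ?case using IH RAS by (auto intro: RA.RAS)
qed

lemma fin_M: "validM A B E s M \<Longrightarrow> finite A \<Longrightarrow> finite B \<Longrightarrow> finite M"
  unfolding validM_def by (rule finite_subset[of _ "A \<times> B"]) auto

lemma aug:
  assumes fin: "finite A" "finite B"
  shows "validM A B E s M \<Longrightarrow> a0 \<in> A \<Longrightarrow> card {y. (a0,y) \<in> M} < s \<Longrightarrow> b \<in> B \<Longrightarrow>
     card {x. (x,b) \<in> M} < s \<Longrightarrow> RA M E a0 k a \<Longrightarrow> E a b \<Longrightarrow> (a,b) \<notin> M \<Longrightarrow>
     \<exists>M'. validM A B E s M' \<and> card M < card M'"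
proof (induction k arbitrary: M b a rule: less_induct)
  case (less k)
  note v = less.prems(1)
  have finM: "finite M" using fin_M v fin by blast
  define P where "P j \<longleftrightarrow> (\<exists>a. RA M E a0 j a \<and> E a b \<and> (a,b) \<notin> M)" for j
  have Pk: "P k" using less.prems P_def by blast
  define k0 where "k0 = (LEAST j. P j)"
  have Pk0: "P k0" unfolding k0_def by (rule LeastI[of P k]) (rule Pk)
  have k0k: "k0 \<le> k" unfolding k0_def by (rule Least_le) (rule Pk)
  have mink0: "\<forall>j<k0. \<not> P j" unfolding k0_def using not_less_Least by blast
  obtain a where a: "RA M E a0 k0 a" "E a b" "(a,b) \<notin> M" using Pk0 P_def by blast
  show ?case
  proof (cases k0)
    case 0
    hence aa0: "a = a0" using RA_0[of M E a0 a] a(1) 0 by simp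
    define M' where "M' = insert (a0,b) M"
    have "validM A B E s M'"
      unfolding validM_def
    proof (intro conjI ballI)
      have "M \<subseteq> {(a, b). a \<in> A \<and> b \<in> B \<and> E a b}" using v unfolding validM_def by blast
      then show "M' \<subseteq> {(a, b). a \<in> A \<and> b \<in> B \<and> E a b}" 
        unfolding M'_def using less.prems(2,4) a(2) aa0 by blast
    next
      fix x assume x: "x \<in> A"
      show "card {y. (x,y) \<in> M'} \<le> s"
      proof (cases "x = a0")
        case True
        have "{y. (x,y) \<in> M'} = insert b {y. (a0,y) \<in> M}" using True M'_def by auto
        moreover have "finite {y. (a0,y) \<in> M}" using v fin unfolding validM_def
          by (rule_tac finite_subset[of _ B]) auto
        ultimately show ?thesis using less.prems(3) by (simp add: card_insert_if)
      next
        case False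
        have "{y. (x,y) \<in> M'} = {y. (x,y) \<in> M}" using False M'_def by auto
        then show ?thesis using v x unfolding validM_def by auto
      qed
    next
      fix y assume y: "y \<in> B"
      show "card {x. (x,y) \<in> M'} \<le> s"
      proof (cases "y = b")
        case True
        have "{x. (x,y) \<in> M'} = insert a0 {x. (x,b) \<in> M}" using True M'_def by auto
        moreover have "finite {x. (x,b) \<in> M}" using v fin unfolding validM_def
          by (rule_tac finite_subset[of _ A]) auto
        ultimately show ?thesis using less.prems(5) by (simp add: card_insert_if)
      next
        case False
        have "{x. (x,y) \<in> M'} = {x. (x,y) \<in> M}" using False M'_def by auto
        then show ?thesis using v y unfolding validM_def by auto
      qed
    qed
    moreover have "card M < card M'" using finM a aa0 M'_def by simp
    ultimately show ?thesis by blast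
  next
    case (Suc j)
    have "RA M E a0 (Suc j) a" using a(1) Suc by (simp only:)
    from RA_Suc[OF this] obtain a1 b1 where ab1: "RA M E a0 j a1" "E a1 b1" "(a1,b1) \<notin> M" "(a,b1) \<in> M"
      by blast
    have noa: "\<forall>i<k0. \<not> RA M E a0 i a" using mink0 a(2,3) unfolding P_def by blast
    have nob: "\<forall>i<k0. \<forall>x. RA M E a0 i x \<longrightarrow> E x b \<longrightarrow> (x,b) \<in> M" using mink0 P_def by blast
    have bb1: "b1 \<noteq> b" using ab1 a by auto
    have aA: "a \<in> A" and b1B: "b1 \<in> B" using ab1(4) v unfolding validM_def by auto
    have "0 < k0" using Suc by simp
    hence aa0: "a \<noteq> a0" using noa RA.RA0[of M E a0] by blast
    define M1 where "M1 = insert (a,b) (M - {(a,b1)})"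
    have RA1: "RA M1 E a0 j a1" using RA_transfer[OF ab1(1) _ noa nob M1_def] Suc by simp
    have ab1': "(a1,b1) \<notin> M1" using ab1 bb1 M1_def by auto
    have finA: "\<And>y. finite {x. (x,y) \<in> M}" using v fin unfolding validM_def
          by (rule_tac finite_subset[of _ A]) auto
    have finB: "\<And>x. finite {y. (x,y) \<in> M}" using v fin unfolding validM_def
          by (rule_tac finite_subset[of _ B]) auto
    have v1: "validM A B E s M1"
      unfolding validM_def
    proof (intro conjI ballI)
      have "M \<subseteq> {(a, b). a \<in> A \<and> b \<in> B \<and> E a b}" using v unfolding validM_def by blast
      then show "M1 \<subseteq> {(a, b). a \<in> A \<and> b \<in> B \<and> E a b}" 
        unfolding M1_def using aA less.prems(4) a(2) by blast
    next
      fix x assume x: "x \<in> A"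
      show "card {y. (x,y) \<in> M1} \<le> s"
      proof (cases "x = a")
        case True
        have "{y. (x,y) \<in> M1} = insert b ({y. (a,y) \<in> M} - {b1})" using True M1_def bb1 by auto
        moreover have "card (insert b ({y. (a,y) \<in> M} - {b1})) = card ({y. (a,y) \<in> M} - {b1}) + 1"
          using finB[of a] a(3) by simp
        moreover have "card ({y. (a,y) \<in> M} - {b1}) + 1 = card {y. (a,y) \<in> M}"
          using finB[of a] ab1(4) card_gt_0_iff[of "{y. (a,y) \<in> M}"] by fastforce
        moreover have "card {y. (a,y) \<in> M} \<le> s" using v aA unfolding validM_def by auto
        ultimately show ?thesis using True by simp
      next
        case False
        have "{y. (x,y) \<in> M1} \<subseteq> {y. (x,y) \<in> M}" using False M1_def by auto
        hence "card {y. (x,y) \<in> M1} \<le> card {y. (x,y) \<in> M}" using finB by (rule card_mono[rotated])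
        then show ?thesis using v x unfolding validM_def by auto
      qed
    next
      fix y assume y: "y \<in> B"
      show "card {x. (x,y) \<in> M1} \<le> s"
      proof (cases "y = b")
        case True
        have "{x. (x,y) \<in> M1} = insert a {x. (x,b) \<in> M}" using True M1_def bb1 by auto
        then show ?thesis using less.prems(5) finA[of b] by (simp add: card_insert_if)
      next
        case False
        have "{x. (x,y) \<in> M1} \<subseteq> {x. (x,y) \<in> M}" using False M1_def by auto
        hence "card {x. (x,y) \<in> M1} \<le> card {x. (x,y) \<in> M}" using finA by (rule card_mono[rotated])
        then show ?thesis using v y unfolding validM_def by auto
      qed
    qed
    have d0: "card {y. (a0,y) \<in> M1} < s"
    proof -
      have "{y. (a0,y) \<in> M1} \<subseteq> {y. (a0,y) \<in> M}" using aa0 M1_def by auto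
      hence "card {y. (a0,y) \<in> M1} \<le> card {y. (a0,y) \<in> M}" using finB by (rule card_mono[rotated])
      then show ?thesis using less.prems(3) by linarith
    qed
    have d1: "card {x. (x,b1) \<in> M1} < s"
    proof -
      have e: "{x. (x,b1) \<in> M1} = {x. (x,b1) \<in> M} - {a}" using bb1 M1_def by auto
      have ain: "a \<in> {x. (x,b1) \<in> M}" using ab1 by auto
      hence "card ({x. (x,b1) \<in> M} - {a}) = card {x. (x,b1) \<in> M} - 1"
        using finA by simp
      moreover have "card {x. (x,b1) \<in> M} \<ge> 1" using ain finA
        by (metis One_nat_def Suc_leI card_gt_0_iff empty_iff)
      moreover have "card {x. (x,b1) \<in> M} \<le> s" using v b1B unfolding validM_def by auto
      ultimately show ?thesis using e by simp
    qed
    have cM1: "card M1 = card M"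
    proof -
      have "card (M - {(a,b1)}) = card M - 1" using ab1 finM by simp
      moreover have "card M \<ge> 1" using ab1 finM
        by (metis One_nat_def Suc_leI card_gt_0_iff empty_iff)
      ultimately show ?thesis unfolding M1_def using finM a by (simp add: card_insert_if)
    qed
    have "j < k" using Suc k0k by simp
    from less.IH[OF this v1 less.prems(2) d0 b1B d1 RA1 ab1(2) ab1'] cM1
    show ?thesis by simp
  qed
qed


lemma card_fst:
  assumes "finite X" "finite B"
  shows "card (M \<inter> (X \<times> B)) = (\<Sum>a\<in>X. card {b\<in>B. (a,b) \<in> M})"
proof -
  have "M \<inter> (X \<times> B) = Sigma X (\<lambda>a. {b\<in>B. (a,b) \<in> M})" by auto
  then show ?thesis using assms by (simp add: card_SigmaI)
qed

lemma card_snd: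
  assumes "finite A" "finite Y"
  shows "card (M \<inter> (A \<times> Y)) = (\<Sum>b\<in>Y. card {a\<in>A. (a,b) \<in> M})"
proof -
  have "prod.swap ` (M \<inter> (A \<times> Y)) = Sigma Y (\<lambda>b. {a\<in>A. (a,b) \<in> M})" by force
  moreover have "card (prod.swap ` (M \<inter> (A \<times> Y))) = card (M \<inter> (A \<times> Y))"
    by (rule card_image) (metis inj_on_def swap_swap)
  ultimately show ?thesis using assms by (simp add: card_SigmaI)
qed

lemma RA_in:
  assumes "RA M E a0 j a" "a0 \<in> A" "M \<subseteq> {(a,b). a \<in> A \<and> b \<in> B \<and> E a b}"
  shows "a \<in> A"
  using assms by (induction rule: RA.induct) auto

lemma improve:
  assumes fin: "finite A" "finite B" and bal: "card A = card B"
    and H: "\<forall>X Y. X \<subseteq> A \<longrightarrow> Y \<subseteq> B \<longrightarrow> s * card X \<le> e_G E X Y + s * (card B - card Y)"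
    and v: "validM A B E s M"
    and nf: "\<not> ((\<forall>a\<in>A. card {b. (a,b) \<in> M} = s) \<and> (\<forall>b\<in>B. card {a. (a,b) \<in> M} = s))"
  shows "\<exists>M'. validM A B E s M' \<and> card M < card M'"
proof -
  have Msub: "M \<subseteq> {(a,b). a \<in> A \<and> b \<in> B \<and> E a b}" using v unfolding validM_def by blast
  have dA: "\<And>a. {b. (a,b) \<in> M} = {b\<in>B. (a,b) \<in> M}" using Msub by auto
  have dB: "\<And>b. {a. (a,b) \<in> M} = {a\<in>A. (a,b) \<in> M}" using Msub by auto
  have leA: "\<forall>a\<in>A. card {b\<in>B. (a,b) \<in> M} \<le> s" using v dA unfolding validM_def by auto
  have leB: "\<forall>b\<in>B. card {a\<in>A. (a,b) \<in> M} \<le> s" using v dB unfolding validM_def by auto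
  have MAB: "M \<inter> (A \<times> B) = M" using Msub by auto
  obtain a0 where a0: "a0 \<in> A" "card {b. (a0,b) \<in> M} < s"
  proof (rule ccontr)
    assume "\<not> thesis"
    hence allA: "\<forall>a\<in>A. card {b\<in>B. (a,b) \<in> M} = s" using leA dA that
      by (metis le_neq_implies_less)
    have "card M = (\<Sum>a\<in>A. card {b\<in>B. (a,b) \<in> M})" using card_fst[OF fin, of M] MAB by simp
    also have "\<dots> = s * card A" using allA by simp
    finally have cM: "card M = s * card A" .
    have "\<exists>b\<in>B. card {a\<in>A. (a,b) \<in> M} < s"
      using nf allA dA dB leB by (metis le_neq_implies_less)
    then have "(\<Sum>b\<in>B. card {a\<in>A. (a,b) \<in> M}) < (\<Sum>b\<in>B. s)"
      using leB fin by (intro sum_strict_mono_ex1) auto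
    moreover have "card M = (\<Sum>b\<in>B. card {a\<in>A. (a,b) \<in> M})" using card_snd[OF fin, of M] MAB by simp
    moreover have "(\<Sum>b\<in>B. s) = s * card B" by simp
    moreover have "s * card A = s * card B" using bal by simp
    ultimately show False using cM by linarith
  qed
  define X where "X = {a. \<exists>j. RA M E a0 j a}"
  have XA: "X \<subseteq> A"
  proof
    fix a assume "a \<in> X"
    then obtain j where "RA M E a0 j a" unfolding X_def by blast
    then show "a \<in> A" using RA_in[OF _ a0(1) Msub] by blast
  qed
  have a0X: "a0 \<in> X" unfolding X_def using RA.RA0[of M E a0] by blast
  define YR where "YR = {b\<in>B. \<exists>a\<in>X. E a b \<and> (a,b) \<notin> M}"
  show ?thesis
  proof (cases "\<exists>b\<in>YR. card {a. (a,b) \<in> M} < s")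
    case True
    then obtain b a j where "b \<in> B" "card {a. (a,b) \<in> M} < s" "RA M E a0 j a" "E a b" "(a,b) \<notin> M"
      unfolding YR_def X_def by blast
    then show ?thesis using aug[OF fin v a0(1) a0(2)] by blast
  next
    case False
    have YRB: "YR \<subseteq> B" unfolding YR_def by blast
    have allYR: "\<forall>b\<in>YR. card {a\<in>A. (a,b) \<in> M} = s" using False leB YRB dB
      by (metis le_neq_implies_less subsetD)
    define Y where "Y = B - YR"
    have finX: "finite X" using XA fin finite_subset by blast
    have finYR: "finite YR" using YRB fin finite_subset by blast
    have cY1: "card (B - YR) = card B - card YR" by (rule card_Diff_subset[OF finYR YRB])
    have cY2: "card YR \<le> card B" by (rule card_mono[OF fin(2) YRB])
    have cY: "card B - card Y = card YR" unfolding Y_def using cY1 cY2 by simp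
    have "Y \<subseteq> B" unfolding Y_def by blast
    then have "s * card X \<le> e_G E X Y + s * (card B - card Y)" using H XA by blast
    then have h: "s * card X \<le> e_G E X Y + s * card YR" using cY by simp
    have eq1: "{(x, y). x \<in> X \<and> y \<in> Y \<and> E x y} = M \<inter> (X \<times> Y)"
    proof
      show "M \<inter> (X \<times> Y) \<subseteq> {(x, y). x \<in> X \<and> y \<in> Y \<and> E x y}" using Msub by auto
    next
      show "{(x, y). x \<in> X \<and> y \<in> Y \<and> E x y} \<subseteq> M \<inter> (X \<times> Y)"
        unfolding Y_def YR_def by auto
    qed
    have eXY: "e_G E X Y = card (M \<inter> (X \<times> Y))" unfolding e_G_def eq1 ..
    have eq2: "M \<inter> (X \<times> YR) = M \<inter> (A \<times> YR)"
    proof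
      show "M \<inter> (X \<times> YR) \<subseteq> M \<inter> (A \<times> YR)" using XA by auto
    next
      show "M \<inter> (A \<times> YR) \<subseteq> M \<inter> (X \<times> YR)"
      proof
        fix p assume p: "p \<in> M \<inter> (A \<times> YR)"
        then obtain x y where xy: "p = (x,y)" "(x,y) \<in> M" "y \<in> YR" by auto
        then obtain a j where "RA M E a0 j a" "E a y" "(a,y) \<notin> M"
          unfolding YR_def X_def by blast
        hence "RA M E a0 (Suc j) x" using xy(2) by (rule RA.RAS)
        then show "p \<in> M \<inter> (X \<times> YR)" using xy unfolding X_def by blast
      qed
    qed
    have c2: "card (M \<inter> (X \<times> YR)) = s * card YR"
      using eq2 card_snd[OF fin(1) finYR, of M] allYR by simp
    have split: "M \<inter> (X \<times> B) = (M \<inter> (X \<times> YR)) \<union> (M \<inter> (X \<times> Y))" unfolding Y_def using YRB by auto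
    have finMX: "finite (M \<inter> (X \<times> B))" using finX fin by simp
    have "card (M \<inter> (X \<times> B)) = card (M \<inter> (X \<times> YR)) + card (M \<inter> (X \<times> Y))"
      unfolding split using finMX split unfolding Y_def
      by (intro card_Un_disjoint) auto
    hence c3: "card (M \<inter> (X \<times> B)) = s * card YR + e_G E X Y" using c2 eXY by simp
    have "card (M \<inter> (X \<times> B)) = (\<Sum>a\<in>X. card {b\<in>B. (a,b) \<in> M})" using card_fst[OF finX fin(2)] .
    also have "\<dots> < (\<Sum>a\<in>X. s)"
      using leA XA a0 a0X finX dA by (intro sum_strict_mono_ex1) auto
    finally have "s * card YR + e_G E X Y < card X * s" using c3 by simp
    then have False using h by (simp add: mult.commute)
    then show ?thesis ..
  qed
qed

lemma exists_factorM:
  assumes fin: "finite A" "finite B" and bal: "card A = card B"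
    and H: "\<forall>X Y. X \<subseteq> A \<longrightarrow> Y \<subseteq> B \<longrightarrow> s * card X \<le> e_G E X Y + s * (card B - card Y)"
  shows "\<exists>M. validM A B E s M \<and> (\<forall>a\<in>A. card {b. (a,b) \<in> M} = s) \<and> (\<forall>b\<in>B. card {a. (a,b) \<in> M} = s)"
proof (rule ccontr)
  assume na: "\<not> ?thesis"
  have step: "\<And>M. validM A B E s M \<Longrightarrow> \<exists>M'. validM A B E s M' \<and> card M < card M'"
    using improve[OF fin bal H] na by blast
  have "\<exists>M. validM A B E s M \<and> N \<le> card M" for N
  proof (induction N)
    case 0
    have "validM A B E s {}" unfolding validM_def by simp
    then show ?case by blast
  next
    case (Suc N)
    then obtain M where "validM A B E s M" "N \<le> card M" by blast
    then obtain M' where "validM A B E s M'" "card M < card M'" using step by blast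
    then show ?case using \<open>N \<le> card M\<close> by (intro exI[of _ M']) simp
  qed
  then obtain M where M: "validM A B E s M" "Suc (card (A \<times> B)) \<le> card M" by blast
  have sub: "M \<subseteq> A \<times> B" using M(1) unfolding validM_def by auto
  have fAB: "finite (A \<times> B)" using fin by simp
  have "card M \<le> card (A \<times> B)" using card_mono[OF fAB sub] .
  then show False using M(2) by simp
qed


lemma extend_subset:
  assumes "finite T" "S \<subseteq> T" "card S \<le> k" "k \<le> card T"
  shows "\<exists>S'. S \<subseteq> S' \<and> S' \<subseteq> T \<and> card S' = k"
proof -
  have fS: "finite S" by (rule finite_subset[OF assms(2,1)])
  have "card (T - S) = card T - card S" using assms fS by (simp add: card_Diff_subset)
  hence "k - card S \<le> card (T - S)" using assms by simp
  then obtain U where U: "U \<subseteq> T - S" "card U = k - card S" "finite U"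
    by (rule obtain_subset_with_card_n)
  have "card (S \<union> U) = card S + card U" using U fS by (intro card_Un_disjoint) auto
  then show ?thesis using U assms by (intro exI[of _ "S \<union> U"]) auto
qed

lemma e_sum1:
  assumes "finite X" "finite Y"
  shows "e_G E X Y = (\<Sum>x\<in>X. card {y\<in>Y. E x y})"
proof -
  have "{(x,y). x \<in> X \<and> y \<in> Y \<and> E x y} = Sigma X (\<lambda>x. {y\<in>Y. E x y})" by auto
  then show ?thesis unfolding e_G_def using assms by (simp add: card_SigmaI)
qed

lemma e_sum2:
  assumes "finite X" "finite Y"
  shows "e_G E X Y = (\<Sum>y\<in>Y. card {x\<in>X. E x y})"
proof -
  have "prod.swap ` {(x,y). x \<in> X \<and> y \<in> Y \<and> E x y} = Sigma Y (\<lambda>y. {x\<in>X. E x y})" by force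
  moreover have "card (prod.swap ` {(x,y). x \<in> X \<and> y \<in> Y \<and> E x y}) = card {(x,y). x \<in> X \<and> y \<in> Y \<and> E x y}"
    by (rule card_image) (metis inj_on_def swap_swap)
  ultimately show ?thesis unfolding e_G_def using assms by (simp add: card_SigmaI)
qed

lemma e_un2:
  assumes "finite X" "finite Y1" "finite Y2" "Y1 \<inter> Y2 = {}"
  shows "e_G E X (Y1 \<union> Y2) = e_G E X Y1 + e_G E X Y2"
  using assms by (simp add: e_sum2 sum.union_disjoint)

lemma e_un1:
  assumes "finite X1" "finite X2" "finite Y" "X1 \<inter> X2 = {}"
  shows "e_G E (X1 \<union> X2) Y = e_G E X1 Y + e_G E X2 Y"
  using assms by (simp add: e_sum1 sum.union_disjoint)

lemma e_mono2:
  assumes "finite X" "finite Y'" "Y \<subseteq> Y'"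
  shows "e_G E X Y \<le> e_G E X Y'"
proof -
  have "finite {(x,y). x \<in> X \<and> y \<in> Y' \<and> E x y}"
    by (rule finite_subset[of _ "X \<times> Y'"]) (use assms in auto)
  moreover have "{(x,y). x \<in> X \<and> y \<in> Y \<and> E x y} \<subseteq> {(x,y). x \<in> X \<and> y \<in> Y' \<and> E x y}" using assms by auto
  ultimately show ?thesis unfolding e_G_def by (rule card_mono)
qed

lemma e_mono1:
  assumes "finite X'" "finite Y" "X \<subseteq> X'"
  shows "e_G E X Y \<le> e_G E X' Y"
proof -
  have "finite {(x,y). x \<in> X' \<and> y \<in> Y \<and> E x y}"
    by (rule finite_subset[of _ "X' \<times> Y"]) (use assms in auto)
  moreover have "{(x,y). x \<in> X \<and> y \<in> Y \<and> E x y} \<subseteq> {(x,y). x \<in> X' \<and> y \<in> Y \<and> E x y}" using assms by auto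
  ultimately show ?thesis unfolding e_G_def by (rule card_mono)
qed


lemma factor_from_M:
  assumes disj: "A \<inter> B = {}" and sym: "\<forall>x y. E x y \<longrightarrow> E y x"
    and v: "validM A B E s M" and dA: "\<forall>a\<in>A. card {b. (a,b) \<in> M} = s"
    and dB: "\<forall>b\<in>B. card {a. (a,b) \<in> M} = s"
  shows "has_factor (A \<union> B) E s"
proof -
  have Msub: "M \<subseteq> {(a,b). a \<in> A \<and> b \<in> B \<and> E a b}" using v unfolding validM_def by blast
  define F where "F = (\<lambda>x y. (x,y) \<in> M \<or> (y,x) \<in> M)"
  have FE: "\<forall>x y. F x y \<longrightarrow> E x y" unfolding F_def using Msub sym by blast
  have Fs: "\<forall>x y. F x y \<longrightarrow> F y x" unfolding F_def by blast
  have deg: "\<forall>v\<in>A \<union> B. degree F v = s"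
  proof
    fix v assume "v \<in> A \<union> B"
    then show "degree F v = s"
    proof
      assume vA: "v \<in> A"
      have "{u. F v u} = {b. (v,b) \<in> M}" unfolding F_def using Msub disj vA by blast
      then show ?thesis unfolding degree_def using dA vA by simp
    next
      assume vB: "v \<in> B"
      have "{u. F v u} = {a. (a,v) \<in> M}" unfolding F_def using Msub disj vB by blast
      then show ?thesis unfolding degree_def using dB vB by simp
    qed
  qed
  show ?thesis unfolding has_factor_def using FE Fs deg by blast
qed


theorem lemma2p10:
  fixes A B :: "'a set" and E :: "'a \<Rightarrow> 'a \<Rightarrow> bool"
    and n :: nat and r \<phi> \<beta>1 \<beta>2 \<beta>3 \<gamma> :: real
  assumes G: "bipartite_graph A B E"
    and bal: "card A = card B" and n_def: "n = card A + card B"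
    and r_pos: "r > 0" and phi_pos: "\<phi> > 0"
    and b1: "0 < \<beta>1" "\<beta>1 < 1" and b2: "0 < \<beta>2" "\<beta>2 < 1"
    and b3: "0 < \<beta>3" "\<beta>3 < 1" and g: "0 < \<gamma>" "\<gamma> < 1"
    and P1: "\<forall>v \<in> A \<union> B. real (degree E v) \<ge> r * (1 - \<beta>1)"
    and P2: "\<forall>X Y. X \<subseteq> A \<and> Y \<subseteq> B \<and> X \<noteq> {} \<and> card X = card Y \<and> real (card X) \<le> r / \<phi>
               \<longrightarrow> real (e_G E X Y) < r * \<beta>2 * real (card X)"
    and P3: "\<forall>X Y. X \<subseteq> A \<and> Y \<subseteq> B \<and> real (card X + card Y) > real n / 2
               \<and> real (min (card X) (card Y)) > r / \<phi>
               \<longrightarrow> real (e_G E X Y) \<ge> 2 * r * (1 - \<beta>3) * real (card X) * real (card Y) / real n"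
    and P4: "\<gamma> \<ge> max \<beta>3 (\<beta>1 + \<beta>2)"
  shows "has_factor (A \<union> B) E (nat \<lfloor>r * (1 - \<gamma>)\<rfloor>)"
proof -
  have finA: "finite A" and finB: "finite B" and disj: "A \<inter> B = {}"
    and sym: "\<forall>x y. E x y \<longrightarrow> E y x"
    and EAB: "\<forall>x y. E x y \<longrightarrow> (x \<in> A \<and> y \<in> B) \<or> (x \<in> B \<and> y \<in> A)"
    using G unfolding bipartite_graph_def by auto
  define m where "m = card B"
  have cA: "card A = m" using bal m_def by simp
  define s where "s = nat \<lfloor>r * (1 - \<gamma>)\<rfloor>"
  have t_pos: "r * (1 - \<gamma>) > 0" using r_pos g by simp
  have s_le: "real s \<le> r * (1 - \<gamma>)"
  proof -
    have "\<lfloor>r * (1 - \<gamma>)\<rfloor> \<ge> 0" using t_pos by simp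
    then have "real s = of_int \<lfloor>r * (1 - \<gamma>)\<rfloor>" unfolding s_def by simp
    then show ?thesis by linarith
  qed
  have s_le3: "real s \<le> r * (1 - \<beta>3)"
  proof -
    have "r * (1 - \<gamma>) \<le> r * (1 - \<beta>3)" using P4 r_pos by (intro mult_left_mono) auto
    then show ?thesis using s_le by linarith
  qed
  have s_le12: "real s \<le> r * (1 - \<beta>1) - r * \<beta>2"
  proof -
    have "r * (1 - \<gamma>) \<le> r * (1 - (\<beta>1 + \<beta>2))" using P4 r_pos by (intro mult_left_mono) auto
    then show ?thesis using s_le by (simp add: algebra_simps)
  qed
  have degA: "degree E a = card {b\<in>B. E a b}" if "a \<in> A" for a
  proof -
    have "{u. E a u} = {b\<in>B. E a b}" using EAB disj that by blast
    then show ?thesis unfolding degree_def by simp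
  qed
  have degB: "degree E b = card {a\<in>A. E a b}" if "b \<in> B" for b
  proof -
    have "{u. E b u} = {a\<in>A. E a b}" using EAB disj that sym by blast
    then show ?thesis unfolding degree_def by simp
  qed
  have eXB: "real (e_G E X B) \<ge> r * (1 - \<beta>1) * real (card X)" if XA: "X \<subseteq> A" for X
  proof -
    have finX: "finite X" by (rule finite_subset[OF XA finA])
    have "real (e_G E X B) = (\<Sum>x\<in>X. real (degree E x))"
      using e_sum1[OF finX finB, of E] degA XA by (simp add: subset_iff)
    also have "\<dots> \<ge> (\<Sum>x\<in>X. r * (1 - \<beta>1))" using P1 XA by (intro sum_mono) auto
    finally show ?thesis by (simp add: mult.commute)
  qed
  have eAY: "real (e_G E A Y) \<ge> r * (1 - \<beta>1) * real (card Y)" if YB: "Y \<subseteq> B" for Y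
  proof -
    have finY: "finite Y" by (rule finite_subset[OF YB finB])
    have "real (e_G E A Y) = (\<Sum>y\<in>Y. real (degree E y))"
      using e_sum2[OF finA finY, of E] degB YB by (simp add: subset_iff)
    also have "\<dots> \<ge> (\<Sum>y\<in>Y. r * (1 - \<beta>1))" using P1 YB by (intro sum_mono) auto
    finally show ?thesis by (simp add: mult.commute)
  qed
  have s_nn: "real s \<ge> 0" by simp
  have H: "\<forall>X Y. X \<subseteq> A \<longrightarrow> Y \<subseteq> B \<longrightarrow> s * card X \<le> e_G E X Y + s * (card B - card Y)"
  proof (intro allI impI)
    fix X Y assume XA: "X \<subseteq> A" and YB: "Y \<subseteq> B"
    have finX: "finite X" by (rule finite_subset[OF XA finA])
    have finY: "finite Y" by (rule finite_subset[OF YB finB])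
    define x where "x = card X"
    define y where "y = card Y"
    have xm: "x \<le> m" unfolding x_def using card_mono[OF finA XA] cA by simp
    have ym: "y \<le> m" unfolding y_def m_def using card_mono[OF finB YB] by simp
    have R: "real s * real x \<le> real (e_G E X Y) + real s * (real m - real y)"
    proof (cases "x + y \<le> m")
      case True
      have "real s * real x \<le> real s * (real m - real y)"
        using True s_nn by (intro mult_left_mono) auto
      then show ?thesis by simp
    next
      case False
      hence x1: "x \<ge> 1" and y1: "y \<ge> 1" using xm ym by auto
      have m1: "m \<ge> 1" using x1 xm by simp
      have gen: "real s * real x \<le> real (e_G E X Y) + real s * (real m - real y)"
        if "real s * real z \<le> real (e_G E X Y)" "real (x + y) - real m \<le> real z" for z
      proof -
        have "real s * (real x + real y - real m) \<le> real s * real z"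
          using that(2) s_nn by (intro mult_left_mono) auto
        then show ?thesis using that(1) by (simp add: algebra_simps)
      qed
      show ?thesis
      proof (cases "real (min x y) > r / \<phi>")
        case True
        have nn: "real n = 2 * real m" using n_def cA m_def by simp
        have "real (card X + card Y) > real n / 2" using False nn x_def y_def by simp
        hence e3: "real (e_G E X Y) \<ge> 2 * r * (1 - \<beta>3) * real x * real y / real n"
          using P3 XA YB True x_def y_def by auto
        have mpos: "real m > 0" using m1 by simp
        have eqn: "2 * r * (1 - \<beta>3) * real x * real y / real n = r * (1 - \<beta>3) * real x * real y / real m"
          using nn mpos by (simp add: field_simps)
        have "r * (1 - \<beta>3) * real x * real y / real m \<le> real (e_G E X Y)"
          using e3 unfolding eqn .
        hence e3': "real (e_G E X Y) * real m \<ge> r * (1 - \<beta>3) * real x * real y"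
          using mpos by (simp add: pos_divide_le_eq)
        have q: "(real m - real x) * (real m - real y) \<ge> 0" using xm ym by simp
        hence q': "real m * (real x + real y - real m) \<le> real x * real y"
          by (simp add: algebra_simps)
        have "real s * (real m * (real x + real y - real m)) \<le> real s * (real x * real y)"
          using q' s_nn by (rule mult_left_mono)
        also have "\<dots> \<le> r * (1 - \<beta>3) * (real x * real y)"
          using s_le3 by (intro mult_right_mono) auto
        finally have "real m * (real s * (real x + real y - real m)) \<le> real m * real (e_G E X Y)"
          using e3' by (simp add: algebra_simps)
        hence "real s * (real x + real y - real m) \<le> real (e_G E X Y)"
          using mpos by simp
        then show ?thesis by (simp add: algebra_simps)
      next
        case False
        hence "real x \<le> r / \<phi> \<or> real y \<le> r / \<phi>" by (simp add: min_def split: if_splits)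
        then show ?thesis
        proof
          assume xs: "real x \<le> r / \<phi>"
          have "card (B - Y) = m - y" using card_Diff_subset[OF finY YB] m_def y_def by simp
          hence le1: "card (B - Y) \<le> x" using \<open>\<not> x + y \<le> m\<close> by simp
          have le2: "x \<le> card B" using xm m_def by simp
          obtain Y' where Y': "B - Y \<subseteq> Y'" "Y' \<subseteq> B" "card Y' = x"
            using extend_subset[OF finB Diff_subset le1 le2] by blast
          have finY': "finite Y'" by (rule finite_subset[OF Y'(2) finB])
          have "X \<noteq> {}" using x1 x_def by auto
          hence pre: "X \<subseteq> A \<and> Y' \<subseteq> B \<and> X \<noteq> {} \<and> card X = card Y' \<and> real (card X) \<le> r / \<phi>"
            using XA Y' xs x_def by simp
          have "real (e_G E X Y') < r * \<beta>2 * real (card X)" using P2 pre by blast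
          hence e2: "real (e_G E X Y') < r * \<beta>2 * real x" using x_def by simp
          have eqB: "Y \<union> (B - Y) = B" using YB by blast
          have "e_G E X (Y \<union> (B - Y)) = e_G E X Y + e_G E X (B - Y)"
            using finB by (intro e_un2[OF finX finY]) auto
          hence "e_G E X B = e_G E X Y + e_G E X (B - Y)" unfolding eqB .
          moreover have "e_G E X (B - Y) \<le> e_G E X Y'" using e_mono2[OF finX finY' Y'(1)] .
          ultimately have "real (e_G E X B) \<le> real (e_G E X Y) + real (e_G E X Y')" by simp
          hence "real (e_G E X Y) \<ge> (r * (1 - \<beta>1) - r * \<beta>2) * real x"
            using eXB[OF XA] e2 x_def by (simp add: algebra_simps)
          moreover have "real s * real x \<le> (r * (1 - \<beta>1) - r * \<beta>2) * real x"
            using s_le12 by (intro mult_right_mono) auto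
          ultimately show ?thesis using gen[of x] ym by simp
        next
          assume ys: "real y \<le> r / \<phi>"
          have "card (A - X) = m - x" using card_Diff_subset[OF finX XA] cA x_def by simp
          hence le1: "card (A - X) \<le> y" using \<open>\<not> x + y \<le> m\<close> by simp
          have le2: "y \<le> card A" using ym cA by simp
          obtain X' where X': "A - X \<subseteq> X'" "X' \<subseteq> A" "card X' = y"
            using extend_subset[OF finA Diff_subset le1 le2] by blast
          have finX': "finite X'" by (rule finite_subset[OF X'(2) finA])
          have "X' \<noteq> {}" using y1 X' by auto
          hence pre: "X' \<subseteq> A \<and> Y \<subseteq> B \<and> X' \<noteq> {} \<and> card X' = card Y \<and> real (card X') \<le> r / \<phi>"
            using X' YB ys y_def by simp
          have "real (e_G E X' Y) < r * \<beta>2 * real (card X')" using P2 pre by blast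
          hence e2: "real (e_G E X' Y) < r * \<beta>2 * real y" using X' by simp
          have eqA: "X \<union> (A - X) = A" using XA by blast
          have "e_G E (X \<union> (A - X)) Y = e_G E X Y + e_G E (A - X) Y"
            using finA by (intro e_un1[OF finX _ finY]) auto
          hence "e_G E A Y = e_G E X Y + e_G E (A - X) Y" unfolding eqA .
          moreover have "e_G E (A - X) Y \<le> e_G E X' Y" using e_mono1[OF finX' finY X'(1)] .
          ultimately have "real (e_G E A Y) \<le> real (e_G E X Y) + real (e_G E X' Y)" by simp
          hence "real (e_G E X Y) \<ge> (r * (1 - \<beta>1) - r * \<beta>2) * real y"
            using eAY[OF YB] e2 y_def by (simp add: algebra_simps)
          moreover have "real s * real y \<le> (r * (1 - \<beta>1) - r * \<beta>2) * real y"
            using s_le12 by (intro mult_right_mono) auto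
          ultimately show ?thesis using gen[of y] xm by simp
        qed
      qed
    qed
    have "real (s * x) \<le> real (e_G E X Y + s * (m - y))"
      using R ym by (simp add: of_nat_diff)
    hence "s * x \<le> e_G E X Y + s * (m - y)" by (simp only: of_nat_le_iff)
    then show "s * card X \<le> e_G E X Y + s * (card B - card Y)" using x_def y_def m_def by simp
  qed
  obtain M where M: "validM A B E s M" "\<forall>a\<in>A. card {b. (a,b) \<in> M} = s" "\<forall>b\<in>B. card {a. (a,b) \<in> M} = s"
    using exists_factorM[OF finA finB bal H] by blast
  show ?thesis using factor_from_M[OF disj sym M] unfolding s_def .
qed

end
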